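(* For every integer $n\geq1$, $\mathrm{C}_{\sharp=n}\leq_W\mathrm{C}_\mathbb{N}$.
   Context: Represented spaces carry partial surjections $\delta:\subseteq\mathbb{N}^\mathbb{N}\to X$; a realizer $F$ of $f$ satisfies $\delta_YF(p)\in f(\delta_X(p))$ for $p\in\operatorname{dom}(f\delta_X)$. $f\leq_W g$ iff there are computable partial $K,H$ on Baire space such that $p\mapsto K\langle p,G(H(p))\rangle$ realizes $f$ for every realizer $G$ of $g$. $\mathrm{C}_\mathbb{N}$ is closed choice on $\mathbb{N}$: given a non-empty $A\subseteq\mathbb{N}$ via an enumeration of $\mathbb{N}\setminus A$, output an element of $A$. Closed subsets of Cantor space are named by binary trees (set of infinite paths); $\mathrm{C}_{\sharp=n}$ is the restriction of $\mathrm{C}_{\{0,1\}^\mathbb{N}}$ (output any point of the closed set) to trees having exactly $n$ vertices at each level $k$ with $2^k\geq n$ and in which, from some finite depth on, every vertex has exactly one child. *)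

theory Defs
  imports Main "HOL-Library.Nat_Bijection" "HOL-Library.Sublist"
begin

type_synonym baire = "nat \<Rightarrow> nat"

inductive PR :: "nat \<Rightarrow> (nat list \<Rightarrow> nat) \<Rightarrow> bool" where
  PR_zero: "PR n (\<lambda>_. 0)"
| PR_succ: "PR 1 (\<lambda>xs. Suc (hd xs))"
| PR_proj: "i < n \<Longrightarrow> PR n (\<lambda>xs. xs ! i)"
| PR_comp: "PR m g \<Longrightarrow> length hs = m \<Longrightarrow> (\<forall>h\<in>set hs. PR n h)
            \<Longrightarrow> PR n (\<lambda>xs. g (map (\<lambda>h. h xs) hs))"
| PR_rec: "PR n g \<Longrightarrow> PR (Suc (Suc n)) h
            \<Longrightarrow> PR (Suc n) (\<lambda>xs. rec_nat (g (tl xs)) (\<lambda>k acc. h (k # acc # tl xs)) (hd xs))"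

definition pre :: "baire \<Rightarrow> nat \<Rightarrow> nat list" where
  "pre p n = map p [0..<n]"

text \<open>A computable monotone word function (Type-2 machine): prefix-monotone and
  primitive recursive via the coding of finite sequences.\<close>
definition cmachine :: "(nat list \<Rightarrow> nat list) \<Rightarrow> bool" where
  "cmachine M \<longleftrightarrow> (\<forall>u v. prefix u v \<longrightarrow> prefix (M u) (M v))
     \<and> (\<exists>h. PR 1 h \<and> (\<forall>u. M u = list_decode (h [list_encode u])))"

definition converges :: "(nat list \<Rightarrow> nat list) \<Rightarrow> baire \<Rightarrow> bool" where
  "converges M p \<longleftrightarrow> (\<forall>k. \<exists>n. k < length (M (pre p n)))"

definition run :: "(nat list \<Rightarrow> nat list) \<Rightarrow> baire \<Rightarrow> baire option" where
  "run M p = (if converges M p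
     then Some (\<lambda>k. M (pre p (LEAST n. k < length (M (pre p n)))) ! k) else None)"

definition computable_partial :: "(baire \<Rightarrow> baire option) \<Rightarrow> bool" where
  "computable_partial F \<longleftrightarrow> (\<exists>M. cmachine M \<and> F = run M)"

definition pairB :: "baire \<Rightarrow> baire \<Rightarrow> baire" where
  "pairB p q = (\<lambda>i. if even i then p (i div 2) else q (i div 2))"

text \<open>A representation: the domain of names together with the naming map.\<close>
type_synonym 'a rep = "baire set \<times> (baire \<Rightarrow> 'a)"

definition realizes :: "'a rep \<Rightarrow> 'b rep \<Rightarrow> ('a \<Rightarrow> 'b set) \<Rightarrow> (baire \<Rightarrow> baire option) \<Rightarrow> bool" where
  "realizes X Y f F \<longleftrightarrow>
     (\<forall>p\<in>fst X. f (snd X p) \<noteq> {} \<longrightarrow>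
        (\<exists>q. F p = Some q \<and> q \<in> fst Y \<and> snd Y q \<in> f (snd X p)))"

definition weihrauch_le ::
  "'a rep \<Rightarrow> 'b rep \<Rightarrow> ('a \<Rightarrow> 'b set) \<Rightarrow> 'c rep \<Rightarrow> 'd rep \<Rightarrow> ('c \<Rightarrow> 'd set) \<Rightarrow> bool" where
  "weihrauch_le X Y f Z W g \<longleftrightarrow>
     (\<exists>K H. computable_partial K \<and> computable_partial H \<and>
        (\<forall>G. realizes Z W g G \<longrightarrow>
           realizes X Y f (\<lambda>p. Option.bind (H p) (\<lambda>r. Option.bind (G r) (\<lambda>s. K (pairB p s))))))"

text \<open>Closed subsets of N, named by enumerations of the complement
  (n is listed by the value n+1; the value 0 means "nothing").\<close>
definition rep_closedN :: "nat set rep" where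
  "rep_closedN = (UNIV, \<lambda>p. {m. \<forall>k. p k \<noteq> Suc m})"

definition rep_nat :: "nat rep" where
  "rep_nat = (UNIV, \<lambda>p. p 0)"

definition C_N :: "nat set \<Rightarrow> nat set" where
  "C_N A = A"

definition binary_trees_name :: "baire \<Rightarrow> bool list set" where
  "binary_trees_name p = {w. p (list_encode (map of_bool w)) = 1}"

definition rep_tree :: "bool list set rep" where
  "rep_tree = ({p. (\<forall>k. p k \<le> 1) \<and>
                    (\<forall>w v. w \<in> binary_trees_name p \<longrightarrow> prefix v w \<longrightarrow> v \<in> binary_trees_name p)},
               binary_trees_name)"

definition rep_cantor :: "(nat \<Rightarrow> bool) rep" where
  "rep_cantor = ({p. \<forall>i. p i \<le> 1}, \<lambda>p i. p i = 1)"

definition paths :: "bool list set \<Rightarrow> (nat \<Rightarrow> bool) set" where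
  "paths T = {x. \<forall>m. map x [0..<m] \<in> T}"

definition sharp_tree :: "nat \<Rightarrow> bool list set \<Rightarrow> bool" where
  "sharp_tree n T \<longleftrightarrow>
     (\<forall>k. n \<le> 2 ^ k \<longrightarrow> card {w\<in>T. length w = k} = n)
   \<and> (\<exists>d. \<forall>w\<in>T. d \<le> length w \<longrightarrow> card {b. w @ [b] \<in> T} = 1)"

definition C_sharp :: "nat \<Rightarrow> bool list set \<Rightarrow> (nat \<Rightarrow> bool) set" where
  "C_sharp n T = (if sharp_tree n T then paths T else {})"

end

theory Submission
  imports Defs
begin

definition prc :: "nat \<Rightarrow> (nat list \<Rightarrow> nat) \<Rightarrow> bool" where
  "prc n f \<longleftrightarrow> (\<exists>g. PR n g \<and> (\<forall>xs. length xs = n \<longrightarrow> g xs = f xs))"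

lemma prc_cong: "prc n f \<Longrightarrow> (\<And>xs. length xs = n \<Longrightarrow> f xs = g xs) \<Longrightarrow> prc n g"
  unfolding prc_def by metis

lemma PR_prf: "PR n f \<Longrightarrow> prc n f"
  unfolding prc_def by auto

lemma prc_zero: "prc n (\<lambda>_. 0)" by (rule PR_prf, rule PR_zero)

lemma prc_proj: "i < n \<Longrightarrow> prc n (\<lambda>xs. xs ! i)" by (rule PR_prf, rule PR_proj)

lemma prc_comp:
  assumes g: "prc m g" and len: "length hs = m" and hs: "\<forall>h\<in>set hs. prc n h"
  shows "prc n (\<lambda>xs. g (map (\<lambda>h. h xs) hs))"
proof -
  from g obtain g' where g': "PR m g'" "\<And>xs. length xs = m \<Longrightarrow> g' xs = g xs"
    unfolding prc_def by blast
  have "\<exists>hs'. length hs' = length hs \<and> (\<forall>h\<in>set hs'. PR n h) \<and>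
         (\<forall>xs. length xs = n \<longrightarrow> map (\<lambda>h. h xs) hs' = map (\<lambda>h. h xs) hs)"
    using hs
  proof (induction hs)
    case Nil then show ?case by auto
  next
    case (Cons h hs)
    then obtain hs' where a: "length hs' = length hs" "\<forall>h\<in>set hs'. PR n h"
         "\<forall>xs. length xs = n \<longrightarrow> map (\<lambda>h. h xs) hs' = map (\<lambda>h. h xs) hs" by auto
    from Cons.prems obtain h' where "PR n h'" "\<forall>xs. length xs = n \<longrightarrow> h' xs = h xs"
      unfolding prc_def by auto
    then show ?case using a by (intro exI[of _ "h' # hs'"]) auto
  qed
  then obtain hs' where a: "length hs' = length hs" "\<forall>h\<in>set hs'. PR n h"
         "\<forall>xs. length xs = n \<longrightarrow> map (\<lambda>h. h xs) hs' = map (\<lambda>h. h xs) hs" by blast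
  have "PR n (\<lambda>xs. g' (map (\<lambda>h. h xs) hs'))"
    using a len g' by (intro PR_comp) auto
  moreover have "\<forall>xs. length xs = n \<longrightarrow> g' (map (\<lambda>h. h xs) hs') = g (map (\<lambda>h. h xs) hs)"
    using a len g' by auto
  ultimately show ?thesis unfolding prc_def by blast
qed

lemma prc_rec:
  assumes "prc n g" "prc (Suc (Suc n)) h"
  shows "prc (Suc n) (\<lambda>xs. rec_nat (g (tl xs)) (\<lambda>k acc. h (k # acc # tl xs)) (hd xs))"
proof -
  from assms obtain g' h' where a: "PR n g'" "\<And>xs. length xs = n \<Longrightarrow> g' xs = g xs"
     "PR (Suc (Suc n)) h'" "\<And>xs. length xs = Suc (Suc n) \<Longrightarrow> h' xs = h xs"
    unfolding prc_def by blast
  have "PR (Suc n) (\<lambda>xs. rec_nat (g' (tl xs)) (\<lambda>k acc. h' (k # acc # tl xs)) (hd xs))"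
    using a by (intro PR_rec)
  moreover have "rec_nat (g' (tl xs)) (\<lambda>k acc. h' (k # acc # tl xs)) m
     = rec_nat (g (tl xs)) (\<lambda>k acc. h (k # acc # tl xs)) m" if "length xs = Suc n" for xs m
    using that a by (induction m) auto
  ultimately show ?thesis unfolding prc_def by blast
qed

lemma prc_comp1:
  assumes "prc 1 (\<lambda>xs. g (xs!0))" "prc n a"
  shows "prc n (\<lambda>xs. g (a xs))"
  using prc_comp[OF assms(1), of "[a]" n] assms(2) by simp

lemma prc_comp2:
  assumes "prc 2 (\<lambda>xs. g (xs!0) (xs!1))" "prc n a" "prc n b"
  shows "prc n (\<lambda>xs. g (a xs) (b xs))"
  using prc_comp[OF assms(1), of "[a,b]" n] assms(2,3) by simp

lemma prc_comp3:
  assumes "prc 3 (\<lambda>xs. g (xs!0) (xs!1) (xs!2))" "prc n a" "prc n b" "prc n c"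
  shows "prc n (\<lambda>xs. g (a xs) (b xs) (c xs))"
  using prc_comp[OF assms(1), of "[a,b,c]" n] assms(2,3,4) by simp

lemma hd_len1: "length xs = Suc 0 \<Longrightarrow> hd xs = xs ! 0"
  by (cases xs) auto

lemma prc_Suc1: "prc 1 (\<lambda>xs. Suc (xs!0))"
  by (rule prc_cong[OF PR_prf[OF PR_succ]]) (simp add: hd_len1)

lemma prc_Suc: "prc n a \<Longrightarrow> prc n (\<lambda>xs. Suc (a xs))"
  by (rule prc_comp1[OF prc_Suc1])

lemma prc_const: "prc n (\<lambda>_. c)"
  by (induction c) (auto intro: prc_zero prc_Suc)

lemma map_nth_upt: "length xs = n \<Longrightarrow> map (\<lambda>i. xs ! i) [0..<n] = xs"
  by (metis map_nth)

lemma prc_iter: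
  assumes G: "prc n G" and H: "prc (Suc (Suc n)) (\<lambda>ys. H (ys!0) (ys!1) (drop 2 ys))"
    and T: "prc n T"
  shows "prc n (\<lambda>xs. rec_nat (G xs) (\<lambda>k acc. H k acc xs) (T xs))"
proof -
  have F: "prc (Suc n) (\<lambda>xs. rec_nat (G (tl xs)) (\<lambda>k acc. H k acc (tl xs)) (hd xs))"
    using prc_rec[OF G H] by simp
  have "prc n (\<lambda>xs. (\<lambda>xs. rec_nat (G (tl xs)) (\<lambda>k acc. H k acc (tl xs)) (hd xs))
                 (map (\<lambda>h. h xs) (T # map (\<lambda>i xs. xs ! i) [0..<n])))"
    using T by (intro prc_comp[OF F]) (auto intro: prc_proj)
  then show ?thesis
    by (rule prc_cong) (simp add: map_nth_upt[unfolded o_def] o_def)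
qed

lemma prc_projd: "k + i < n \<Longrightarrow> prc n (\<lambda>xs. drop k xs ! i)"
  by (rule prc_cong[OF prc_proj[of "k+i"]]) auto

lemma rec_add: "rec_nat b (\<lambda>k acc. Suc acc) a = a + (b::nat)"
  by (induction a) auto
lemma rec_mult: "rec_nat 0 (\<lambda>k acc. acc + b) a = a * (b::nat)"
  by (induction a) auto
lemma rec_pred: "rec_nat 0 (\<lambda>k acc. k) a = a - (1::nat)"
  by (induction a) auto
lemma rec_sub: "rec_nat a (\<lambda>k acc. acc - Suc 0) b = a - (b::nat)"
  by (induction b) auto

lemma prc_add2: "prc 2 (\<lambda>xs. xs!0 + xs!1)"
proof -
  have "prc 2 (\<lambda>xs. rec_nat (xs!1) (\<lambda>k acc. (\<lambda>k acc xs. Suc acc) k acc xs) (xs!0))"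
    by (rule prc_iter) (auto intro!: prc_proj prc_Suc)
  then show ?thesis by (rule prc_cong) (simp add: rec_add)
qed

lemma prc_add: "prc n a \<Longrightarrow> prc n b \<Longrightarrow> prc n (\<lambda>xs. a xs + b xs)"
  by (rule prc_comp2[OF prc_add2])

lemma prc_mult2: "prc 2 (\<lambda>xs. xs!0 * xs!1)"
proof -
  have "prc 2 (\<lambda>xs. rec_nat 0 (\<lambda>k acc. (\<lambda>k acc xs. acc + xs!1) k acc xs) (xs!0))"
    by (rule prc_iter) (auto intro!: prc_proj prc_add prc_const prc_projd)
  then show ?thesis by (rule prc_cong) (simp add: rec_mult)
qed

lemma prc_mult: "prc n a \<Longrightarrow> prc n b \<Longrightarrow> prc n (\<lambda>xs. a xs * b xs)"
  by (rule prc_comp2[OF prc_mult2])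

lemma prc_pred1: "prc 1 (\<lambda>xs. xs!0 - 1)"
proof -
  have "prc 1 (\<lambda>xs. rec_nat 0 (\<lambda>k acc. (\<lambda>k acc xs. k) k acc xs) (xs!0))"
    by (rule prc_iter) (auto intro!: prc_proj prc_const)
  then show ?thesis by (rule prc_cong) (simp add: rec_pred)
qed

lemma prc_sub2: "prc 2 (\<lambda>xs. xs!0 - xs!1)"
proof -
  have "prc 2 (\<lambda>xs. rec_nat (xs!0) (\<lambda>k acc. (\<lambda>k acc xs. acc - 1) k acc xs) (xs!1))"
    apply (rule prc_iter)
      apply (rule prc_proj, simp)
     apply (rule prc_comp1[OF prc_pred1], rule prc_proj, simp)
    apply (rule prc_proj, simp)
    done
  then show ?thesis by (rule prc_cong) (simp add: rec_sub)
qed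

lemma prc_sub: "prc n a \<Longrightarrow> prc n b \<Longrightarrow> prc n (\<lambda>xs. a xs - b xs)"
  by (rule prc_comp2[OF prc_sub2])

definition prp :: "nat \<Rightarrow> (nat list \<Rightarrow> bool) \<Rightarrow> bool" where
  "prp n P \<longleftrightarrow> prc n (\<lambda>xs. of_bool (P xs))"

lemma prc_ofbool: "prp n P \<Longrightarrow> prc n (\<lambda>xs. of_bool (P xs))"
  by (simp add: prp_def)

lemma prp_le: "prc n a \<Longrightarrow> prc n b \<Longrightarrow> prp n (\<lambda>xs. a xs \<le> b xs)"
  unfolding prp_def
  by (rule prc_cong[of _ "\<lambda>xs. 1 - (a xs - b xs)"]) (auto intro!: prc_sub prc_const)

lemma prp_less: "prc n a \<Longrightarrow> prc n b \<Longrightarrow> prp n (\<lambda>xs. a xs < b xs)"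
  unfolding prp_def
  by (rule prc_cong[of _ "\<lambda>xs. 1 - (1 - (b xs - a xs))"]) (auto intro!: prc_sub prc_const)

lemma prp_eq: "prc n a \<Longrightarrow> prc n b \<Longrightarrow> prp n (\<lambda>xs. a xs = b xs)"
  unfolding prp_def
  by (rule prc_cong[of _ "\<lambda>xs. 1 - ((a xs - b xs) + (b xs - a xs))"]) (auto intro!: prc_sub prc_add prc_const)

lemma prp_neq: "prc n a \<Longrightarrow> prc n b \<Longrightarrow> prp n (\<lambda>xs. a xs \<noteq> b xs)"
  unfolding prp_def
  by (rule prc_cong[of _ "\<lambda>xs. 1 - (1 - ((a xs - b xs) + (b xs - a xs)))"]) (auto intro!: prc_sub prc_add prc_const)

lemma prp_and: "prp n P \<Longrightarrow> prp n Q \<Longrightarrow> prp n (\<lambda>xs. P xs \<and> Q xs)"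
  unfolding prp_def
  by (rule prc_cong[of _ "\<lambda>xs. of_bool (P xs) * of_bool (Q xs)"]) (auto intro!: prc_mult)

lemma prp_not: "prp n P \<Longrightarrow> prp n (\<lambda>xs. \<not> P xs)"
  unfolding prp_def
  by (rule prc_cong[of _ "\<lambda>xs. 1 - of_bool (P xs)"]) (auto intro!: prc_sub prc_const)

lemma prp_or: "prp n P \<Longrightarrow> prp n Q \<Longrightarrow> prp n (\<lambda>xs. P xs \<or> Q xs)"
  using prp_not[OF prp_and[OF prp_not prp_not], of n P Q] by simp

lemma prp_iff: "prp n P \<Longrightarrow> prp n Q \<Longrightarrow> prp n (\<lambda>xs. P xs \<longleftrightarrow> Q xs)"
  unfolding prp_def
  by (rule prc_cong[of _ "\<lambda>xs. 1 - ((of_bool (P xs) - of_bool (Q xs)) + (of_bool (Q xs) - of_bool (P xs)))"])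
     (auto intro!: prc_sub prc_add prc_const)

lemma prc_if: "prp n P \<Longrightarrow> prc n a \<Longrightarrow> prc n b \<Longrightarrow> prc n (\<lambda>xs. if P xs then a xs else b xs)"
  unfolding prp_def
  by (rule prc_cong[of _ "\<lambda>xs. of_bool (P xs) * a xs + (1 - of_bool (P xs)) * b xs"])
     (auto intro!: prc_sub prc_add prc_mult prc_const)

lemma drop2_map: "length ys = Suc (Suc n) \<Longrightarrow> ys ! 0 # map (\<lambda>i. ys ! Suc (Suc i)) [0..<n] = ys ! 0 # drop 2 ys"
  by (auto simp: list_eq_iff_nth_eq nth_Cons split: nat.split)

lemma prc_bsum:
  assumes f: "prc (Suc n) (\<lambda>ys. f (ys!0) (tl ys))" and T: "prc n T"
  shows "prc n (\<lambda>xs. \<Sum>j<T xs. f j xs)"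
proof -
  have f2: "prc (Suc (Suc n)) (\<lambda>ys. (\<lambda>ys. f (ys!0) (tl ys)) (map (\<lambda>h. h ys) ((\<lambda>ys. ys!0) # map (\<lambda>i ys. ys ! Suc (Suc i)) [0..<n])))"
    by (rule prc_comp[OF f]) (auto intro!: prc_proj)
  have "prc (Suc (Suc n)) (\<lambda>ys. ys!1 + f (ys!0) (drop 2 ys))"
    apply (rule prc_add[OF prc_proj])
     apply simp
    apply (rule prc_cong[OF f2])
    apply (simp add: o_def drop2_map)
    done
  then have "prc n (\<lambda>xs. rec_nat 0 (\<lambda>k acc. (\<lambda>k acc xs. acc + f k xs) k acc xs) (T xs))"
    by (intro prc_iter prc_const T) (simp add: add.commute)
  moreover have "rec_nat 0 (\<lambda>k acc. acc + f k xs) m = (\<Sum>j<m. f j xs)" for xs m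
    by (induction m) auto
  ultimately show ?thesis by (rule_tac prc_cong) auto
qed

lemma prp_bex:
  assumes P: "prp (Suc n) (\<lambda>ys. P (ys!0) (tl ys))" and T: "prc n T"
  shows "prp n (\<lambda>xs. \<exists>j<T xs. P j xs)"
proof -
  have "prc n (\<lambda>xs. 1 - (1 - (\<Sum>j<T xs. of_bool (P j xs))))"
    using P unfolding prp_def by (intro prc_sub prc_const prc_bsum T)
  moreover have "(1::nat) - (1 - (\<Sum>j<m. of_bool (Q j))) = of_bool (\<exists>j<m. Q j)" for m :: nat and Q
  proof -
    have "(\<Sum>j<m. of_bool (Q j)::nat) = 0 \<longleftrightarrow> \<not>(\<exists>j<m. Q j)"
      by (subst sum_eq_0_iff) auto
    moreover have a: "\<And>s::nat. 1 - (1 - s) = (if s = 0 then 0 else 1)" by auto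
    ultimately show ?thesis by (simp only: a) simp
  qed
  ultimately show ?thesis unfolding prp_def
    by (rule_tac prc_cong) auto
qed

lemma prp_ball:
  assumes P: "prp (Suc n) (\<lambda>ys. P (ys!0) (tl ys))" and T: "prc n T"
  shows "prp n (\<lambda>xs. \<forall>j<T xs. P j xs)"
proof -
  have "prp n (\<lambda>xs. \<not> (\<exists>j<T xs. \<not> P j xs))"
    by (rule prp_not, rule prp_bex[where P="\<lambda>j xs. \<not> P j xs", OF prp_not[OF P] T])
  then show ?thesis by simp
qed

lemma prc_compL:
  assumes F: "prc k F" and E: "\<And>i. i < k \<Longrightarrow> prc m (\<lambda>ys. E ys ! i)"
    and L: "\<And>ys. length ys = m \<Longrightarrow> length (E ys) = k"
  shows "prc m (\<lambda>ys. F (E ys))"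
proof -
  have "prc m (\<lambda>ys. F (map (\<lambda>h. h ys) (map (\<lambda>i ys. E ys ! i) [0..<k])))"
    by (rule prc_comp[OF F]) (auto intro: E)
  then show ?thesis
    by (rule prc_cong) (simp add: o_def map_nth_upt L)
qed

lemma prc_tl: "Suc i < n \<Longrightarrow> prc n (\<lambda>xs. tl xs ! i)"
  by (rule prc_cong[OF prc_proj[of "Suc i"]]) (auto simp: nth_tl)

lemma prc_tltl: "Suc (Suc i) < n \<Longrightarrow> prc n (\<lambda>xs. tl (tl xs) ! i)"
  by (rule prc_cong[OF prc_proj[of "Suc (Suc i)"]]) (auto simp: nth_tl)

lemma prc_hd: "0 < n \<Longrightarrow> prc n (\<lambda>xs. hd xs)"
  by (rule prc_cong[OF prc_proj[of 0]]) (auto simp: hd_conv_nth)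

lemma triangle_sum: "triangle n = (\<Sum>j<Suc n. j)"
  by (induction n) auto

lemma prc_tri1: "prc 1 (\<lambda>xs. triangle (xs!0))"
proof -
  have "prc 1 (\<lambda>xs. \<Sum>j<Suc (xs!0). (\<lambda>j xs. j) j xs)"
    by (rule prc_bsum) (auto intro!: prc_proj prc_Suc)
  then show ?thesis by (rule prc_cong) (simp add: triangle_sum)
qed

lemma prc_tri: "prc n a \<Longrightarrow> prc n (\<lambda>xs. triangle (a xs))"
  by (rule prc_comp1[OF prc_tri1])

lemma prc_penc2: "prc 2 (\<lambda>xs. prod_encode (xs!0, xs!1))"
  unfolding prod_encode_def
  by (simp, intro prc_add prc_tri prc_proj) auto

lemma prc_penc: "prc n a \<Longrightarrow> prc n b \<Longrightarrow> prc n (\<lambda>xs. prod_encode (a xs, b xs))"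
  using prc_comp2[OF prc_penc2] by simp

lemma pfst_sum: "fst (prod_decode m) = (\<Sum>x<Suc m. x * of_bool (\<exists>y<Suc m. prod_encode (x, y) = m))"
proof -
  obtain a b where ab: "prod_decode m = (a, b)" by (cases "prod_decode m")
  then have m: "m = prod_encode (a, b)" by (metis prod_decode_inverse)
  have ale: "a \<le> m" "b \<le> m" using m le_prod_encode_1 le_prod_encode_2 by auto
  have "(\<exists>y<Suc m. prod_encode (x, y) = m) \<longleftrightarrow> x = a" for x
    using m ale by auto
  then have "(\<Sum>x<Suc m. x * of_bool (\<exists>y<Suc m. prod_encode (x, y) = m)) = (\<Sum>x<Suc m. if x = a then a else 0)"
    by (intro sum.cong) auto
  also have "\<dots> = a" using ale by (simp add: sum.delta)
  finally show ?thesis using ab by simp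
qed

lemma psnd_sum: "snd (prod_decode m) = (\<Sum>y<Suc m. y * of_bool (\<exists>x<Suc m. prod_encode (x, y) = m))"
proof -
  obtain a b where ab: "prod_decode m = (a, b)" by (cases "prod_decode m")
  then have m: "m = prod_encode (a, b)" by (metis prod_decode_inverse)
  have ale: "a \<le> m" "b \<le> m" using m le_prod_encode_1 le_prod_encode_2 by auto
  have "(\<exists>x<Suc m. prod_encode (x, y) = m) \<longleftrightarrow> y = b" for y
    using m ale by auto
  then have "(\<Sum>y<Suc m. y * of_bool (\<exists>x<Suc m. prod_encode (x, y) = m)) = (\<Sum>y<Suc m. if y = b then b else 0)"
    by (intro sum.cong) auto
  also have "\<dots> = b" using ale by (simp add: sum.delta)
  finally show ?thesis using ab by simp
qed

lemma prc_pfst1: "prc 1 (\<lambda>xs. fst (prod_decode (xs!0)))"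
proof -
  have "prc 1 (\<lambda>xs. \<Sum>x<Suc (xs!0). (\<lambda>x xs. x * of_bool (\<exists>y<Suc (xs!0). prod_encode (x, y) = xs!0)) x xs)"
  proof (rule prc_bsum)
    show "prc 1 (\<lambda>xs. Suc (xs ! 0))" by (auto intro!: prc_Suc prc_proj)
    have "prp (Suc 1) (\<lambda>ys. \<exists>y<Suc (tl ys ! 0). (\<lambda>y ys. prod_encode (ys!0, y) = tl ys ! 0) y ys)"
      by (rule prp_bex) (auto intro!: prp_eq prc_penc prc_tl prc_proj prc_tltl prc_Suc)
    then show "prc (Suc 1) (\<lambda>ys. ys ! 0 * of_bool (\<exists>y<Suc (tl ys ! 0). prod_encode (ys ! 0, y) = tl ys ! 0))"
      by (auto intro!: prc_mult prc_proj prc_ofbool)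
  qed
  then show ?thesis by (rule prc_cong) (simp add: pfst_sum)
qed

lemma prc_psnd1: "prc 1 (\<lambda>xs. snd (prod_decode (xs!0)))"
proof -
  have "prc 1 (\<lambda>xs. \<Sum>y<Suc (xs!0). (\<lambda>y xs. y * of_bool (\<exists>x<Suc (xs!0). prod_encode (x, y) = xs!0)) y xs)"
  proof (rule prc_bsum)
    show "prc 1 (\<lambda>xs. Suc (xs ! 0))" by (auto intro!: prc_Suc prc_proj)
    have "prp (Suc 1) (\<lambda>ys. \<exists>x<Suc (tl ys ! 0). (\<lambda>x ys. prod_encode (x, ys!0) = tl ys ! 0) x ys)"
      by (rule prp_bex) (auto intro!: prp_eq prc_penc prc_tl prc_proj prc_tltl prc_Suc)
    then show "prc (Suc 1) (\<lambda>ys. ys ! 0 * of_bool (\<exists>x<Suc (tl ys ! 0). prod_encode (x, ys ! 0) = tl ys ! 0))"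
      by (auto intro!: prc_mult prc_proj prc_ofbool)
  qed
  then show ?thesis by (rule prc_cong) (simp add: psnd_sum)
qed

lemma prc_pfst: "prc n a \<Longrightarrow> prc n (\<lambda>xs. fst (prod_decode (a xs)))"
  by (rule prc_comp1[OF prc_pfst1])
lemma prc_psnd: "prc n a \<Longrightarrow> prc n (\<lambda>xs. snd (prod_decode (a xs)))"
  by (rule prc_comp1[OF prc_psnd1])

definition tlc :: "nat \<Rightarrow> nat" where "tlc c = snd (prod_decode (c - 1))"
definition dropc :: "nat \<Rightarrow> nat \<Rightarrow> nat" where "dropc c k = rec_nat c (\<lambda>_ acc. tlc acc) k"
definition lenc :: "nat \<Rightarrow> nat" where "lenc c = (\<Sum>k<c. of_bool (dropc c k \<noteq> 0))"
definition nthz :: "nat \<Rightarrow> nat \<Rightarrow> nat" where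
  "nthz c i = (if i < lenc c then fst (prod_decode (dropc c i - 1)) else 0)"

lemma list_decode_tlc: "list_decode (tlc c) = tl (list_decode c)"
proof (cases c)
  case 0 then show ?thesis by (simp add: tlc_def prod_decode_def prod_decode_aux.simps)
next
  case (Suc m) then show ?thesis by (simp add: tlc_def split: prod.split)
qed

lemma list_decode_dropc: "list_decode (dropc c k) = drop k (list_decode c)"
  by (induction k) (auto simp: dropc_def list_decode_tlc drop_Suc tl_drop)

lemma list_decode_eq_Nil: "list_decode c = [] \<longleftrightarrow> c = 0"
  by (metis list_decode.simps(1) list_decode_inverse list_encode.simps(1))

lemma length_list_decode_le: "length (list_decode c) \<le> c"
proof (induction c rule: list_decode.induct)
  case 1 then show ?case by simp
next
  case (2 n)
  obtain x y where xy: "prod_decode n = (x, y)" by (cases "prod_decode n")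
  have "y \<le> n" using le_prod_encode_2[of y x] xy by (metis prod_decode_inverse)
  then show ?case using 2[OF xy[symmetric]] xy by simp
qed

lemma lenc_eq: "lenc c = length (list_decode c)"
proof -
  have "dropc c k \<noteq> 0 \<longleftrightarrow> k < length (list_decode c)" for k
    by (metis list_decode_dropc list_decode_eq_Nil drop_eq_Nil not_le)
  then have "lenc c = (\<Sum>k<c. if k < length (list_decode c) then 1 else 0)"
    unfolding lenc_def by (intro sum.cong) auto
  also have "\<dots> = card {k. k < c \<and> k < length (list_decode c)}"
    by (simp add: sum.If_cases Int_def conj_commute)
  also have "{k. k < c \<and> k < length (list_decode c)} = {..<length (list_decode c)}"
    using length_list_decode_le[of c] by auto
  finally show ?thesis by simp
qed

lemma nthz_eq: "nthz c i = (if i < length (list_decode c) then list_decode c ! i else 0)"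
proof (cases "i < length (list_decode c)")
  case True
  then have "drop i (list_decode c) \<noteq> []" by simp
  then have ne: "dropc c i \<noteq> 0" using list_decode_dropc list_decode_eq_Nil by metis
  then obtain m where m: "dropc c i = Suc m" by (cases "dropc c i") auto
  have "list_decode (dropc c i) = drop i (list_decode c)" by (rule list_decode_dropc)
  moreover have "list_decode (Suc m) = fst (prod_decode m) # list_decode (snd (prod_decode m))"
    by (simp split: prod.split)
  ultimately have "hd (drop i (list_decode c)) = fst (prod_decode m)"
    using m by simp
  then show ?thesis using True m by (simp add: nthz_def lenc_eq hd_drop_conv_nth)
qed (simp add: nthz_def lenc_eq)

lemma prc_tlc1: "prc 1 (\<lambda>xs. tlc (xs!0))"
  unfolding tlc_def by (intro prc_psnd prc_sub prc_proj prc_const) auto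

lemma prc_tlc: "prc n a \<Longrightarrow> prc n (\<lambda>xs. tlc (a xs))"
  by (rule prc_comp1[OF prc_tlc1])

lemma prc_dropc2: "prc 2 (\<lambda>xs. dropc (xs!0) (xs!1))"
  unfolding dropc_def
  by (rule prc_iter[where H="\<lambda>k acc xs. tlc acc"]) (auto intro!: prc_tlc prc_proj)

lemma prc_dropc: "prc n a \<Longrightarrow> prc n b \<Longrightarrow> prc n (\<lambda>xs. dropc (a xs) (b xs))"
  by (rule prc_comp2[OF prc_dropc2])

lemma prc_lenc1: "prc 1 (\<lambda>xs. lenc (xs!0))"
  unfolding lenc_def
proof (rule prc_bsum[where f="\<lambda>k xs. of_bool (dropc (xs!0) k \<noteq> 0)"])
  show "prc (Suc 1) (\<lambda>ys. of_bool (dropc (tl ys ! 0) (ys ! 0) \<noteq> 0))"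
    by (intro prc_ofbool prp_neq prc_dropc prc_tl prc_proj prc_const) auto
qed (auto intro: prc_proj)

lemma prc_lenc: "prc n a \<Longrightarrow> prc n (\<lambda>xs. lenc (a xs))"
  by (rule prc_comp1[OF prc_lenc1])

lemma prc_nthz2: "prc 2 (\<lambda>xs. nthz (xs!0) (xs!1))"
  unfolding nthz_def
  by (intro prc_if prp_less prc_lenc prc_pfst prc_sub prc_dropc prc_proj prc_const) auto

lemma prc_nthz: "prc n a \<Longrightarrow> prc n b \<Longrightarrow> prc n (\<lambda>xs. nthz (a xs) (b xs))"
  by (rule prc_comp2[OF prc_nthz2])

lemma mapb_rec: "k \<le> T \<Longrightarrow> rec_nat 0 (\<lambda>k acc. Suc (prod_encode (g (T - Suc k), acc))) k
   = list_encode (map g [T - k..<T])"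
proof (induction k)
  case 0 then show ?case by simp
next
  case (Suc k)
  then have "[T - Suc k..<T] = (T - Suc k) # [T - k..<T]"
    by (metis Suc_diff_Suc Suc_le_lessD diff_less upt_conv_Cons zero_less_Suc less_le_trans)
  then show ?case using Suc by simp
qed

lemma prc_mapb:
  assumes f: "prc (Suc n) (\<lambda>ys. f (ys!0) (tl ys))" and T: "prc n T"
  shows "prc n (\<lambda>xs. list_encode (map (\<lambda>i. f i xs) [0..<T xs]))"
proof -
  have T2: "prc (Suc (Suc n)) (\<lambda>ys. T (drop 2 ys))"
    by (rule prc_compL[OF T]) (auto intro: prc_projd)
  have f2: "prc (Suc (Suc n)) (\<lambda>ys. (\<lambda>ys. f (ys!0) (tl ys)) ((T (drop 2 ys) - Suc (ys!0)) # drop 2 ys))"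
  proof (rule prc_compL[OF f])
    fix i assume "i < Suc n"
    show "prc (Suc (Suc n)) (\<lambda>ys. ((T (drop 2 ys) - Suc (ys ! 0)) # drop 2 ys) ! i)"
    proof (cases i)
      case 0 then show ?thesis by (simp, intro prc_sub T2 prc_Suc prc_proj) auto
    next
      case (Suc j) then show ?thesis using \<open>i < Suc n\<close> by (simp, intro prc_projd) auto
    qed
  qed simp
  have "prc n (\<lambda>xs. rec_nat 0 (\<lambda>k acc. (\<lambda>k acc xs. Suc (prod_encode (f (T xs - Suc k) xs, acc))) k acc xs) (T xs))"
    by (rule prc_iter) (auto intro!: prc_const T prc_Suc prc_penc prc_proj f2[simplified])
  then show ?thesis
  proof (rule prc_cong)
    fix xs :: "nat list"
    show "rec_nat 0 (\<lambda>k acc. (\<lambda>k acc xs. Suc (prod_encode (f (T xs - Suc k) xs, acc))) k acc xs) (T xs) =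
      list_encode (map (\<lambda>i. f i xs) [0..<T xs])"
      using mapb_rec[of "T xs" "T xs" "\<lambda>i. f i xs"] by simp
  qed
qed

definition snocc :: "nat \<Rightarrow> nat \<Rightarrow> nat" where
  "snocc c b = list_encode (map (\<lambda>i. if i < lenc c then nthz c i else b) [0..<Suc (lenc c)])"

lemma snocc_eq: "snocc (list_encode v) b = list_encode (v @ [b])"
proof -
  have "map (\<lambda>i. if i < length v then (if i < length v then v ! i else 0) else b) [0..<Suc (length v)] = v @ [b]"
    by (rule nth_equalityI) (auto simp: nth_append less_Suc_eq)
  then show ?thesis unfolding snocc_def lenc_eq nthz_eq list_encode_inverse by simp
qed

lemma prc_snocc2: "prc 2 (\<lambda>xs. snocc (xs!0) (xs!1))"
proof -
  have A: "prc (Suc 2) (\<lambda>ys. (\<lambda>i xs. if i < lenc (xs!0) then nthz (xs!0) i else xs!1) (ys!0) (tl ys))"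
    by (intro prc_if prp_less prc_lenc prc_nthz prc_tl prc_proj; simp)
  have B: "prc 2 (\<lambda>xs. Suc (lenc (xs!0)))"
    by (intro prc_Suc prc_lenc prc_proj; simp)
  show ?thesis using prc_mapb[OF A B] unfolding snocc_def .
qed

lemma prc_snocc: "prc n a \<Longrightarrow> prc n b \<Longrightarrow> prc n (\<lambda>xs. snocc (a xs) (b xs))"
  by (rule prc_comp2[OF prc_snocc2])

lemma prp_comp1: "prp 1 (\<lambda>xs. P (xs!0)) \<Longrightarrow> prc n a \<Longrightarrow> prp n (\<lambda>xs. P (a xs))"
  unfolding prp_def by (rule prc_comp1)
lemma prp_comp2: "prp 2 (\<lambda>xs. P (xs!0) (xs!1)) \<Longrightarrow> prc n a \<Longrightarrow> prc n b \<Longrightarrow> prp n (\<lambda>xs. P (a xs) (b xs))"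
  unfolding prp_def by (rule prc_comp2)
lemma prp_comp3: "prp 3 (\<lambda>xs. P (xs!0) (xs!1) (xs!2)) \<Longrightarrow> prc n a \<Longrightarrow> prc n b \<Longrightarrow> prc n c \<Longrightarrow> prp n (\<lambda>xs. P (a xs) (b xs) (c xs))"
  unfolding prp_def by (rule prc_comp3)

definition validc :: "nat \<Rightarrow> bool" where
  "validc c \<longleftrightarrow> (\<forall>j<lenc c. nthz c j \<le> 1)"
definition isprefC :: "nat \<Rightarrow> nat \<Rightarrow> bool" where
  "isprefC m c \<longleftrightarrow> lenc m \<le> lenc c \<and> (\<forall>j<lenc m. nthz m j = nthz c j)"
definition badC :: "nat \<Rightarrow> nat \<Rightarrow> nat \<Rightarrow> bool" where
  "badC U i c \<longleftrightarrow> validc c \<and> snocc c 1 < i \<and> snocc c 0 < i \<and> nthz U c = 1 \<and>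
     (nthz U (snocc c 1) = 1 \<longleftrightarrow> nthz U (snocc c 0) = 1)"
definition certC :: "nat \<Rightarrow> nat \<Rightarrow> nat \<Rightarrow> bool" where
  "certC U i m \<longleftrightarrow> \<not> validc m \<or> (m < i \<and> nthz U m \<noteq> 1) \<or> (\<exists>c<i. isprefC m c \<and> badC U i c)"
definition eC :: "nat \<Rightarrow> nat \<Rightarrow> nat" where
  "eC U i = (if certC U i (fst (prod_decode i)) then Suc (fst (prod_decode i)) else 0)"
definition hH :: "nat \<Rightarrow> nat" where
  "hH U = list_encode (map (eC U) [0..<lenc U])"

definition kstepC :: "nat \<Rightarrow> nat \<Rightarrow> nat" where
  "kstepC U a = (if 2 * snocc a 1 < lenc U then (if nthz U (2 * snocc a 1) = 1 then snocc a 1 else snocc a 0) else a)"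
definition koutC :: "nat \<Rightarrow> nat" where
  "koutC U = (if lenc U < 2 then 0 else rec_nat (nthz U 1) (\<lambda>k acc. kstepC U acc) (lenc U))"

lemma prp_validc1: "prp 1 (\<lambda>xs. validc (xs!0))"
  unfolding validc_def
  by (rule prp_ball[where P="\<lambda>j xs. nthz (xs!0) j \<le> 1"])
     (intro prp_le prc_nthz prc_tl prc_proj prc_const prc_lenc; simp)+

lemma prp_validc: "prc n a \<Longrightarrow> prp n (\<lambda>xs. validc (a xs))"
  by (rule prp_comp1[OF prp_validc1])

lemma prp_isprefC2: "prp 2 (\<lambda>xs. isprefC (xs!0) (xs!1))"
  unfolding isprefC_def
  apply (rule prp_and)
   apply (intro prp_le prc_lenc prc_proj; simp)
  apply (rule prp_ball[where P="\<lambda>j xs. nthz (xs!0) j = nthz (xs!1) j"])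
   apply (intro prp_eq prc_nthz prc_tl prc_proj; simp)
  apply (intro prc_lenc prc_proj; simp)
  done

lemma prp_isprefC: "prc n a \<Longrightarrow> prc n b \<Longrightarrow> prp n (\<lambda>xs. isprefC (a xs) (b xs))"
  by (rule prp_comp2[OF prp_isprefC2])

lemma prp_badC3: "prp 3 (\<lambda>xs. badC (xs!0) (xs!1) (xs!2))"
  unfolding badC_def
  by (intro prp_and prp_validc prp_less prp_eq prp_iff prc_snocc prc_nthz prc_proj prc_const prc_mult; simp)

lemma prp_badC: "prc n a \<Longrightarrow> prc n b \<Longrightarrow> prc n c \<Longrightarrow> prp n (\<lambda>xs. badC (a xs) (b xs) (c xs))"
  by (rule prp_comp3[OF prp_badC3])

lemma prp_certC3: "prp 3 (\<lambda>xs. certC (xs!0) (xs!1) (xs!2))"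
  unfolding certC_def
  apply (intro prp_or prp_not prp_validc prp_and prp_less prp_neq prc_nthz prc_proj prc_const; simp?)
  apply (intro prp_eq prc_nthz prc_proj prc_const; simp)
  apply (rule prp_bex[where P="\<lambda>c xs. isprefC (xs!2) c \<and> badC (xs!0) (xs!Suc 0) c"])
   apply (intro prp_and prp_isprefC prp_badC prc_tl prc_proj; simp)
  apply (intro prc_proj; simp)
  done

lemma prp_certC: "prc n a \<Longrightarrow> prc n b \<Longrightarrow> prc n c \<Longrightarrow> prp n (\<lambda>xs. certC (a xs) (b xs) (c xs))"
  by (rule prp_comp3[OF prp_certC3])

lemma prc_eC2: "prc 2 (\<lambda>xs. eC (xs!0) (xs!1))"
  unfolding eC_def
  by (intro prc_if prp_certC prc_pfst prc_Suc prc_proj prc_const; simp)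

lemma prc_eC: "prc n a \<Longrightarrow> prc n b \<Longrightarrow> prc n (\<lambda>xs. eC (a xs) (b xs))"
  by (rule prc_comp2[OF prc_eC2])

lemma prc_hH1: "prc 1 (\<lambda>xs. hH (xs!0))"
proof -
  have A: "prc (Suc 1) (\<lambda>ys. (\<lambda>i xs. eC (xs!0) i) (ys!0) (tl ys))"
    by (intro prc_eC prc_tl prc_proj; simp)
  have B: "prc 1 (\<lambda>xs. lenc (xs!0))"
    by (intro prc_lenc prc_proj; simp)
  show ?thesis using prc_mapb[OF A B] unfolding hH_def .
qed

lemma prc_kstepC2: "prc 2 (\<lambda>xs. kstepC (xs!0) (xs!1))"
  unfolding kstepC_def
  by (intro prc_if prp_less prp_eq prc_mult prc_snocc prc_lenc prc_nthz prc_proj prc_const; simp)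

lemma prc_kstepC: "prc n a \<Longrightarrow> prc n b \<Longrightarrow> prc n (\<lambda>xs. kstepC (a xs) (b xs))"
  by (rule prc_comp2[OF prc_kstepC2])

lemma prc_koutC1: "prc 1 (\<lambda>xs. koutC (xs!0))"
  unfolding koutC_def
  apply (intro prc_if prp_less prc_lenc prc_proj prc_const; simp?)
  apply (rule prc_iter[where H="\<lambda>k acc xs. kstepC (xs!0) acc"])
    apply (intro prc_nthz prc_proj prc_const; simp)
   apply (intro prc_kstepC prc_projd prc_proj; simp)
  apply (intro prc_lenc prc_proj; simp)
  done

lemma prefix_nth: "prefix xs ys \<Longrightarrow> i < length xs \<Longrightarrow> xs ! i = ys ! i"
  by (auto simp: prefix_def nth_append)

lemma lenc_code[simp]: "lenc (list_encode u) = length u"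
  by (simp add: lenc_eq)
lemma nthz_code[simp]: "nthz (list_encode u) c = (if c < length u then u ! c else 0)"
  by (simp add: nthz_eq)
lemma snocc_eq': "snocc c b = list_encode (list_decode c @ [b])"
  by (metis snocc_eq list_decode_inverse)
lemma list_decode_snocc[simp]: "list_decode (snocc c b) = list_decode c @ [b]"
  by (simp add: snocc_eq')

definition MH :: "nat list \<Rightarrow> nat list" where
  "MH u = list_decode (hH (list_encode u))"
definition MK :: "nat list \<Rightarrow> nat list" where
  "MK u = list_decode (koutC (list_encode u))"

lemma cm_pr:
  assumes "prc 1 (\<lambda>xs. f (xs!0))"
  shows "\<exists>h. PR 1 h \<and> (\<forall>u. list_decode (f (list_encode u)) = list_decode (h [list_encode u]))"
proof -
  from assms obtain g where "PR 1 g" "\<And>xs. length xs = 1 \<Longrightarrow> g xs = f (xs!0)"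
    unfolding prc_def by blast
  then show ?thesis by (intro exI[of _ g]) auto
qed

lemma MH_eq: "MH u = map (eC (list_encode u)) [0..<length u]"
  by (simp add: MH_def hH_def)

lemma eC_cong:
  assumes "\<And>c. c < i \<Longrightarrow> nthz U c = nthz V c"
  shows "eC U i = eC V i"
proof -
  have "certC U i m = certC V i m" for m
    unfolding certC_def badC_def using assms by (auto 0 4)
  then show ?thesis by (simp add: eC_def)
qed

lemma MH_mono: "prefix u v \<Longrightarrow> prefix (MH u) (MH v)"
proof -
  assume pv: "prefix u v"
  then have len: "length u \<le> length v" by (rule prefix_length_le)
  have eq: "eC (list_encode u) i = eC (list_encode v) i" if "i < length u" for i
    by (rule eC_cong) (use that pv len in \<open>auto simp: prefix_nth\<close>)
  have "[0..<length v] = [0..<length u] @ [length u..<length v]"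
    using len by (metis le_add_diff_inverse upt_add_eq_append zero_le)
  then have "MH v = map (eC (list_encode v)) [0..<length u] @ map (eC (list_encode v)) [length u..<length v]"
    by (simp add: MH_eq)
  moreover have "map (eC (list_encode v)) [0..<length u] = MH u"
    using eq by (simp add: MH_eq)
  ultimately show ?thesis by simp
qed

lemma cmachine_MH: "cmachine MH"
  unfolding cmachine_def
  using MH_mono cm_pr[OF prc_hH1] by (auto simp: MH_def)

definition iterK :: "nat \<Rightarrow> nat \<Rightarrow> nat \<Rightarrow> nat" where
  "iterK U a k = rec_nat a (\<lambda>k acc. kstepC U acc) k"

lemma iterK_0[simp]: "iterK U a 0 = a" by (simp add: iterK_def)
lemma iterK_Suc[simp]: "iterK U a (Suc k) = kstepC U (iterK U a k)" by (simp add: iterK_def)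

lemma koutC_eq: "koutC U = (if lenc U < 2 then 0 else iterK U (nthz U 1) (lenc U))"
  by (simp add: koutC_def iterK_def)

lemma kstep_ext: "prefix (list_decode a) (list_decode (kstepC U a))"
  by (simp add: kstepC_def)

lemma iterK_mono: "k \<le> k' \<Longrightarrow> prefix (list_decode (iterK U a k)) (list_decode (iterK U a k'))"
proof (induction k' )
  case 0 then show ?case by simp
next
  case (Suc k')
  show ?case
  proof (cases "k = Suc k'")
    case True then show ?thesis by simp
  next
    case False
    then have "prefix (list_decode (iterK U a k)) (list_decode (iterK U a k'))" using Suc by simp
    then show ?thesis using kstep_ext[of "iterK U a k'" U] by (simp add: prefix_order.trans)
  qed
qed

lemma iterK_cmp:
  assumes len: "lenc U \<le> lenc V" and agree: "\<And>c. c < lenc U \<Longrightarrow> nthz U c = nthz V c"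
  shows "iterK U a k = iterK V a k \<or>
    (kstepC U (iterK U a k) = iterK U a k \<and> prefix (list_decode (iterK U a k)) (list_decode (iterK V a k)))"
proof (induction k)
  case 0 then show ?case by simp
next
  case (Suc k)
  let ?x = "iterK U a k" and ?y = "iterK V a k"
  from Suc show ?case
  proof
    assume e: "?x = ?y"
    show ?thesis
    proof (cases "2 * snocc ?x 1 < lenc U")
      case True
      then have "kstepC U ?x = kstepC V ?x"
        using len agree by (simp add: kstepC_def)
      then show ?thesis using e by simp
    next
      case False
      then have st: "kstepC U ?x = ?x" by (simp add: kstepC_def)
      have "prefix (list_decode ?x) (list_decode (kstepC V ?y))"
        using e kstep_ext by simp
      then show ?thesis using st by simp
    qed
  next
    assume h: "kstepC U ?x = ?x \<and> prefix (list_decode ?x) (list_decode ?y)"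
    then have "prefix (list_decode ?x) (list_decode (kstepC V ?y))"
      using kstep_ext prefix_order.trans by blast
    then show ?thesis using h by simp
  qed
qed

lemma MK_mono: "prefix u v \<Longrightarrow> prefix (MK u) (MK v)"
proof -
  assume pv: "prefix u v"
  then have len: "length u \<le> length v" by (rule prefix_length_le)
  show ?thesis
  proof (cases "length u < 2")
    case True then show ?thesis by (simp add: MK_def koutC_eq)
  next
    case False
    let ?U = "list_encode u" and ?V = "list_encode v"
    have ag: "\<And>c. c < lenc ?U \<Longrightarrow> nthz ?U c = nthz ?V c"
      using pv len by (auto simp: prefix_nth)
    have a1: "nthz ?U 1 = nthz ?V 1" using ag False by simp
    have "prefix (list_decode (iterK ?U (nthz ?U 1) (length u))) (list_decode (iterK ?V (nthz ?U 1) (length u)))"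
      using iterK_cmp[of ?U ?V, OF _ ag, of "nthz ?U 1" "length u"] len by auto
    also have "prefix (list_decode (iterK ?V (nthz ?U 1) (length u))) (list_decode (iterK ?V (nthz ?U 1) (length v)))"
      using len by (rule iterK_mono)
    finally show ?thesis using False len a1 by (simp add: MK_def koutC_eq)
  qed
qed

lemma cmachine_MK: "cmachine MK"
  unfolding cmachine_def
  using MK_mono cm_pr[OF prc_koutC1] by (auto simp: MK_def)

definition dec :: "nat \<Rightarrow> bool list" where
  "dec c = map (\<lambda>x. x = 1) (list_decode c)"

definition goodm :: "bool list set \<Rightarrow> nat \<Rightarrow> bool" where
  "goodm T m \<longleftrightarrow> validc m \<and> dec m \<in> T \<and> (\<forall>v\<in>T. prefix (dec m) v \<longrightarrow> (v @ [True] \<in> T \<longleftrightarrow> v @ [False] \<notin> T))"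

lemma validc_iff: "validc c \<longleftrightarrow> (\<forall>x\<in>set (list_decode c). x \<le> 1)"
  by (simp add: validc_def lenc_eq nthz_eq all_set_conv_all_nth)

lemma valid_code_dec: "validc c \<Longrightarrow> list_encode (map of_bool (dec c)) = c"
proof -
  assume "validc c"
  then have "map of_bool (map (\<lambda>x. x = 1) (list_decode c)) = list_decode c"
    by (auto simp: validc_iff intro!: map_idI)
  then show ?thesis by (simp add: dec_def)
qed

lemma validc_code: "validc (list_encode (map of_bool w))"
  by (auto simp: validc_iff)

lemma dec_code[simp]: "dec (list_encode (map of_bool w)) = w"
  by (induction w) (auto simp: dec_def)

lemma dec_snocc[simp]: "dec (snocc c b) = dec c @ [b = 1]"
  by (simp add: dec_def)

lemma validc_snocc: "validc (snocc c b) \<longleftrightarrow> validc c \<and> b \<le> 1"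
  by (auto simp: validc_iff)

lemma mem_tree: "validc c \<Longrightarrow> dec c \<in> binary_trees_name p \<longleftrightarrow> p c = 1"
  by (simp add: binary_trees_name_def valid_code_dec)

lemma prefix_iff_nth: "prefix xs ys \<longleftrightarrow> length xs \<le> length ys \<and> (\<forall>j<length xs. xs ! j = ys ! j)"
proof
  assume "prefix xs ys" then show "length xs \<le> length ys \<and> (\<forall>j<length xs. xs ! j = ys ! j)"
    by (auto simp: prefix_length_le prefix_nth)
next
  assume h: "length xs \<le> length ys \<and> (\<forall>j<length xs. xs ! j = ys ! j)"
  then have "xs = take (length xs) ys" by (auto intro: nth_equalityI)
  then show "prefix xs ys" by (metis take_is_prefix)
qed

lemma isprefC_iff: "isprefC m c \<longleftrightarrow> prefix (list_decode m) (list_decode c)"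
  by (auto simp: isprefC_def lenc_eq nthz_eq prefix_iff_nth)

lemma prefix_dec: "prefix (list_decode m) (list_decode c) \<Longrightarrow> prefix (dec m) (dec c)"
  by (auto simp: dec_def prefix_def)

lemma prefix_dec_valid: "validc m \<Longrightarrow> validc c \<Longrightarrow> prefix (dec m) (dec c) \<Longrightarrow> prefix (list_decode m) (list_decode c)"
  by (metis valid_code_dec list_encode_inverse map_mono_prefix)

definition certP :: "(nat \<Rightarrow> nat) \<Rightarrow> nat \<Rightarrow> nat \<Rightarrow> bool" where
  "certP p i m \<longleftrightarrow> \<not> validc m \<or> (m < i \<and> p m \<noteq> 1) \<or>
     (\<exists>c<i. isprefC m c \<and> validc c \<and> snocc c 1 < i \<and> snocc c 0 < i \<and> p c = 1 \<and>
        (p (snocc c 1) = 1 \<longleftrightarrow> p (snocc c 0) = 1))"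

definition EP :: "(nat \<Rightarrow> nat) \<Rightarrow> nat \<Rightarrow> nat" where
  "EP p k = eC (list_encode (pre p (Suc k))) k"

lemma certC_certP: "(\<And>c. c < i \<Longrightarrow> nthz U c = p c) \<Longrightarrow> certC U i m \<longleftrightarrow> certP p i m"
  unfolding certC_def certP_def badC_def by (auto 0 4)

lemma EP_eq: "EP p k = (if certP p k (fst (prod_decode k)) then Suc (fst (prod_decode k)) else 0)"
proof -
  have "certC (list_encode (pre p (Suc k))) k m \<longleftrightarrow> certP p k m" for m
    by (rule certC_certP) (simp add: pre_def del: upt_Suc)
  then show ?thesis by (simp add: EP_def eC_def)
qed

lemma EP_Suc: "EP p k = Suc m \<longleftrightarrow> m = fst (prod_decode k) \<and> certP p k m"
  by (auto simp: EP_eq)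

lemma certP_mono: "certP p i m \<Longrightarrow> i \<le> i' \<Longrightarrow> certP p i' m"
  unfolding certP_def by (auto 0 3)

lemma certP_sound:
  assumes "certP p i m"
  shows "\<not> goodm (binary_trees_name p) m"
proof
  let ?T = "binary_trees_name p"
  assume g: "goodm ?T m"
  then have vm: "validc m" and mT: "dec m \<in> ?T"
    and ch: "\<And>v. v \<in> ?T \<Longrightarrow> prefix (dec m) v \<Longrightarrow> (v @ [True] \<in> ?T \<longleftrightarrow> v @ [False] \<notin> ?T)"
    by (auto simp: goodm_def)
  from assms vm consider "p m \<noteq> 1" | c where "isprefC m c" "validc c" "p c = 1"
     "p (snocc c 1) = 1 \<longleftrightarrow> p (snocc c 0) = 1"
    unfolding certP_def by blast
  then show False
  proof cases
    case 1 then show False using mT mem_tree[OF vm] by simp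
  next
    case 2
    have vT: "dec c \<in> ?T" using 2 mem_tree by simp
    have pr: "prefix (dec m) (dec c)" using 2 by (simp add: isprefC_iff prefix_dec)
    have "dec c @ [True] \<in> ?T \<longleftrightarrow> p (snocc c 1) = 1"
      using mem_tree[of "snocc c 1" p] 2 by (simp add: validc_snocc)
    moreover have "dec c @ [False] \<in> ?T \<longleftrightarrow> p (snocc c 0) = 1"
      using mem_tree[of "snocc c 0" p] 2 by (simp add: validc_snocc)
    ultimately show False using ch[OF vT pr] 2 by blast
  qed
qed

lemma certP_complete:
  assumes "\<not> goodm (binary_trees_name p) m"
  shows "\<exists>B. certP p B m"
proof -
  let ?T = "binary_trees_name p"
  show ?thesis
  proof (cases "validc m")
    case False then show ?thesis by (auto simp: certP_def)
  next
    case vm: True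
    show ?thesis
    proof (cases "dec m \<in> ?T")
      case False
      then have "p m \<noteq> 1" using mem_tree[OF vm] by simp
      then have "certP p (Suc m) m" by (auto simp: certP_def)
      then show ?thesis by blast
    next
      case True
      with assms vm obtain v where v: "v \<in> ?T" "prefix (dec m) v" "v @ [True] \<in> ?T \<longleftrightarrow> v @ [False] \<in> ?T"
        unfolding goodm_def by blast
      define c where "c = list_encode (map of_bool v)"
      have vc: "validc c" and dc: "dec c = v" by (simp_all add: c_def validc_code)
      have "isprefC m c" using prefix_dec_valid[OF vm vc] v(2) dc by (simp add: isprefC_iff)
      moreover have "p c = 1" using mem_tree[OF vc, of p] v dc by simp
      moreover have "dec c @ [True] \<in> ?T \<longleftrightarrow> p (snocc c 1) = 1"
        using mem_tree[of "snocc c 1" p] vc by (simp add: validc_snocc)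
      moreover have "dec c @ [False] \<in> ?T \<longleftrightarrow> p (snocc c 0) = 1"
        using mem_tree[of "snocc c 0" p] vc by (simp add: validc_snocc)
      ultimately have "certP p (Suc (c + snocc c 1 + snocc c 0)) m"
        unfolding certP_def using vc v(3) dc
        by (intro disjI2) (rule exI[of _ c], auto)
      then show ?thesis by blast
    qed
  qed
qed

lemma EP_complete:
  assumes "\<not> goodm (binary_trees_name p) m"
  shows "\<exists>k. EP p k = Suc m"
proof -
  obtain B where B: "certP p B m" using certP_complete[OF assms] by blast
  let ?k = "prod_encode (m, B)"
  have "B \<le> ?k" by (rule le_prod_encode_2)
  then have "certP p ?k m" using certP_mono[OF B] by blast
  then show ?thesis by (intro exI[of _ ?k]) (simp add: EP_Suc)
qed

lemma EP_sound: "EP p k = Suc m \<Longrightarrow> \<not> goodm (binary_trees_name p) m"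
  using certP_sound by (auto simp: EP_Suc)

lemma run_MH: "run MH p = Some (EP p)"
proof -
  have len: "length (MH (pre p n)) = n" for n by (simp add: MH_eq pre_def)
  have conv: "converges MH p" unfolding converges_def len by (auto intro: lessI)
  have "(LEAST n. k < length (MH (pre p n))) = Suc k" for k
    unfolding len by (rule Least_equality) auto
  then show ?thesis
    using conv by (auto simp: run_def MH_eq EP_def pre_def simp del: upt_Suc)
qed

definition istep :: "(nat \<Rightarrow> nat) \<Rightarrow> nat \<Rightarrow> nat" where
  "istep p a = (if p (snocc a 1) = 1 then snocc a 1 else snocc a 0)"

definition ideal :: "(nat \<Rightarrow> nat) \<Rightarrow> nat \<Rightarrow> nat \<Rightarrow> nat" where
  "ideal p m k = (istep p ^^ k) m"

lemma ideal_0[simp]: "ideal p m 0 = m" by (simp add: ideal_def)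
lemma ideal_Suc[simp]: "ideal p m (Suc k) = istep p (ideal p m k)" by (simp add: ideal_def)

lemma ideal_inv:
  assumes g: "goodm (binary_trees_name p) m"
  shows "validc (ideal p m k) \<and> dec (ideal p m k) \<in> binary_trees_name p \<and>
         prefix (dec m) (dec (ideal p m k)) \<and> length (list_decode (ideal p m k)) = length (list_decode m) + k"
proof (induction k)
  case 0 then show ?case using g by (simp add: goodm_def)
next
  case (Suc k)
  let ?T = "binary_trees_name p" and ?a = "ideal p m k"
  from Suc have va: "validc ?a" and aT: "dec ?a \<in> ?T" and pa: "prefix (dec m) (dec ?a)"
    and la: "length (list_decode ?a) = length (list_decode m) + k" by auto
  have ch: "dec ?a @ [True] \<in> ?T \<longleftrightarrow> dec ?a @ [False] \<notin> ?T"
    using g aT pa by (auto simp: goodm_def)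
  have m1: "dec ?a @ [True] \<in> ?T \<longleftrightarrow> p (snocc ?a 1) = 1"
    using mem_tree[of "snocc ?a 1" p] va by (simp add: validc_snocc)
  have m0: "dec ?a @ [False] \<in> ?T \<longleftrightarrow> p (snocc ?a 0) = 1"
    using mem_tree[of "snocc ?a 0" p] va by (simp add: validc_snocc)
  have "dec (istep p ?a) \<in> ?T" using ch m1 m0 by (auto simp: istep_def)
  moreover have "validc (istep p ?a)" using va by (simp add: istep_def validc_snocc)
  moreover have "prefix (dec m) (dec (istep p ?a))"
    using pa by (auto simp: istep_def intro: prefix_order.trans)
  moreover have "length (list_decode (istep p ?a)) = length (list_decode m) + Suc k"
    using la by (simp add: istep_def)
  ultimately show ?case by simp
qed

lemma ideal_mono: "k \<le> k' \<Longrightarrow> prefix (list_decode (ideal p m k)) (list_decode (ideal p m k'))"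
proof (induction k')
  case 0 then show ?case by simp
next
  case (Suc k')
  show ?case
  proof (cases "k = Suc k'")
    case True then show ?thesis by simp
  next
    case False
    then have "prefix (list_decode (ideal p m k)) (list_decode (ideal p m k'))" using Suc by simp
    moreover have "prefix (list_decode (ideal p m k')) (list_decode (ideal p m (Suc k')))"
      by (simp add: istep_def)
    ultimately show ?thesis by (rule prefix_order.trans)
  qed
qed

lemma pairB_even[simp]: "pairB p s (2 * x) = p x" by (simp add: pairB_def)
lemma pairB_1[simp]: "pairB p s 1 = s 0" by (simp add: pairB_def)
lemma pairB_Suc0[simp]: "pairB p s (Suc 0) = s 0" by (simp add: pairB_def)

lemma nthz_pre: "nthz (list_encode (pre q N)) c = (if c < N then q c else 0)"
  by (simp add: pre_def)

lemma kstep_ideal: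
  "kstepC (list_encode (pre (pairB p s) N)) (ideal p m j) \<in> {ideal p m j, ideal p m (Suc j)}"
  by (auto simp: kstepC_def nthz_pre istep_def pre_def simp del: upt_Suc)

lemma iterK_ideal: "\<exists>j. iterK (list_encode (pre (pairB p s) N)) m k = ideal p m j"
proof (induction k)
  case 0 then show ?case by (auto intro: exI[of _ 0])
next
  case (Suc k)
  then obtain j where "iterK (list_encode (pre (pairB p s) N)) m k = ideal p m j" by blast
  then have "iterK (list_encode (pre (pairB p s) N)) m (Suc k) \<in> {ideal p m j, ideal p m (Suc j)}"
    using kstep_ideal[of p s N m j] by (simp del: ideal_Suc)
  then show ?case by blast
qed

lemma iterK_ideal_exact:
  assumes "\<And>j. j < K \<Longrightarrow> 2 * snocc (ideal p m j) 1 < N"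
  shows "k \<le> K \<Longrightarrow> iterK (list_encode (pre (pairB p s) N)) m k = ideal p m k"
proof (induction k)
  case 0 then show ?case by simp
next
  case (Suc k)
  then have "2 * snocc (ideal p m k) 1 < N" using assms by simp
  then show ?case using Suc by (simp add: kstepC_def nthz_pre istep_def pre_def del: upt_Suc)
qed

lemma MK_pre:
  "2 \<le> N \<Longrightarrow> MK (pre (pairB p s) N) = list_decode (iterK (list_encode (pre (pairB p s) N)) (s 0) N)"
  by (simp add: MK_def koutC_eq nthz_pre pre_def del: upt_Suc)

lemma MK_pre_small: "N < 2 \<Longrightarrow> MK (pre q N) = []"
  by (simp add: MK_def koutC_eq pre_def del: upt_Suc)

definition xpath :: "(nat \<Rightarrow> nat) \<Rightarrow> nat \<Rightarrow> nat \<Rightarrow> nat" where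
  "xpath p m i = list_decode (ideal p m (Suc i)) ! i"

lemma ideal_nth:
  assumes g: "goodm (binary_trees_name p) m" and i: "i < length (list_decode (ideal p m j))"
  shows "list_decode (ideal p m j) ! i = xpath p m i"
proof -
  have li: "i < length (list_decode (ideal p m (Suc i)))" using ideal_inv[OF g, of "Suc i"] by simp
  show ?thesis
  proof (cases "j \<le> Suc i")
    case True
    then show ?thesis using prefix_nth[OF ideal_mono[OF True] i] by (simp add: xpath_def)
  next
    case False
    then have "Suc i \<le> j" by simp
    then show ?thesis using prefix_nth[OF ideal_mono[of "Suc i" j] li] by (simp add: xpath_def)
  qed
qed

lemma run_MK:
  assumes g: "goodm (binary_trees_name p) (s 0)"
  shows "run MK (pairB p s) = Some (xpath p (s 0))"
proof -
  let ?m = "s 0" and ?q = "pairB p s"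
  have big: "\<exists>N. k < length (MK (pre ?q N))" for k
  proof -
    let ?K = "Suc k"
    define N where "N = ?K + 2 + (\<Sum>j<?K. 2 * snocc (ideal p ?m j) 1)"
    have bnd: "\<And>j. j < ?K \<Longrightarrow> 2 * snocc (ideal p ?m j) 1 < N"
    proof -
      fix j assume "j < ?K"
      then have "2 * snocc (ideal p ?m j) 1 \<le> (\<Sum>j<?K. 2 * snocc (ideal p ?m j) 1)"
        by (intro member_le_sum) auto
      then show "2 * snocc (ideal p ?m j) 1 < N" unfolding N_def by linarith
    qed
    have N2: "2 \<le> N" "?K \<le> N" unfolding N_def by auto
    have e: "iterK (list_encode (pre ?q N)) ?m ?K = ideal p ?m ?K"
      by (rule iterK_ideal_exact[OF bnd]) auto
    have "prefix (list_decode (iterK (list_encode (pre ?q N)) ?m ?K)) (list_decode (iterK (list_encode (pre ?q N)) ?m N))"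
      using N2 by (intro iterK_mono)
    then have "length (list_decode (ideal p ?m ?K)) \<le> length (MK (pre ?q N))"
      using e MK_pre[OF N2(1), of p s] prefix_length_le by fastforce
    moreover have "length (list_decode (ideal p ?m ?K)) = length (list_decode ?m) + ?K"
      using ideal_inv[OF g] by blast
    ultimately show ?thesis by (intro exI[of _ N]) simp
  qed
  then have conv: "converges MK ?q" by (simp add: converges_def)
  have val: "MK (pre ?q (LEAST n. k < length (MK (pre ?q n)))) ! k = xpath p ?m k" for k
  proof -
    let ?N = "LEAST n. k < length (MK (pre ?q n))"
    have kl: "k < length (MK (pre ?q ?N))" using big[of k] by (rule LeastI_ex)
    then have "2 \<le> ?N" using MK_pre_small[of ?N ?q] by (cases "?N < 2") auto
    then have "MK (pre ?q ?N) = list_decode (iterK (list_encode (pre ?q ?N)) ?m ?N)" by (rule MK_pre)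
    moreover obtain j where "iterK (list_encode (pre ?q ?N)) ?m ?N = ideal p ?m j"
      using iterK_ideal by blast
    ultimately show ?thesis using kl ideal_nth[OF g] by simp
  qed
  show ?thesis using conv val by (simp add: run_def)
qed

lemma xpath_le1:
  assumes g: "goodm (binary_trees_name p) m" shows "xpath p m i \<le> 1"
proof -
  have "validc (ideal p m (Suc i))" "i < length (list_decode (ideal p m (Suc i)))"
    using ideal_inv[OF g, of "Suc i"] by auto
  then show ?thesis unfolding xpath_def validc_iff by (meson nth_mem)
qed

lemma xpath_paths:
  assumes g: "goodm (binary_trees_name p) m"
    and pc: "\<And>w v. w \<in> binary_trees_name p \<Longrightarrow> prefix v w \<Longrightarrow> v \<in> binary_trees_name p"
  shows "(\<lambda>i. xpath p m i = 1) \<in> paths (binary_trees_name p)"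
  unfolding paths_def
proof (intro CollectI allI)
  fix M
  let ?a = "ideal p m M"
  have inv: "dec ?a \<in> binary_trees_name p" "length (list_decode ?a) = length (list_decode m) + M"
    using ideal_inv[OF g, of M] by auto
  have "map (\<lambda>i. xpath p m i = 1) [0..<M] = take M (dec ?a)"
    using inv(2) by (intro nth_equalityI) (auto simp: dec_def ideal_nth[OF g])
  then show "map (\<lambda>i. xpath p m i = 1) [0..<M] \<in> binary_trees_name p"
    using pc[OF inv(1)] take_is_prefix by metis
qed

lemma card_bool1: "card {b::bool. P b} = 1 \<Longrightarrow> (P True \<longleftrightarrow> \<not> P False)"
proof -
  assume "card {b::bool. P b} = 1"
  then obtain x where x: "{b. P b} = {x}" by (auto simp: card_1_singleton_iff)
  then show ?thesis by (cases x) auto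
qed

lemma exists_good:
  assumes st: "sharp_tree n (binary_trees_name p)" and x: "x \<in> paths (binary_trees_name p)"
  shows "\<exists>m. goodm (binary_trees_name p) m"
proof -
  let ?T = "binary_trees_name p"
  obtain d where d: "\<And>w. w \<in> ?T \<Longrightarrow> d \<le> length w \<Longrightarrow> card {b. w @ [b] \<in> ?T} = 1"
    using st unfolding sharp_tree_def by blast
  define w where "w = map x [0..<d]"
  have wT: "w \<in> ?T" using x by (simp add: paths_def w_def)
  define m where "m = list_encode (map of_bool w)"
  have dm: "dec m = w" unfolding m_def by (rule dec_code)
  have vm: "validc m" unfolding m_def by (rule validc_code)
  have lw: "length w = d" by (simp add: w_def)
  have "goodm ?T m"
    unfolding goodm_def dm
  proof (intro conjI ballI impI vm)
    show "w \<in> ?T" using wT by simp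
  next
    fix v assume v: "v \<in> ?T" "prefix w v"
    then have "d \<le> length v" using prefix_length_le[of w v] lw by simp
    then show "(v @ [True] \<in> ?T) = (v @ [False] \<notin> ?T)" using card_bool1[OF d[OF v(1)]] by simp
  qed
  then show ?thesis by blast
qed

theorem main:
  "weihrauch_le rep_tree rep_cantor (C_sharp n) rep_closedN rep_nat C_N"
  unfolding weihrauch_le_def
proof (intro exI conjI allI impI)
  show "computable_partial (run MK)" unfolding computable_partial_def using cmachine_MK by blast
  show "computable_partial (run MH)" unfolding computable_partial_def using cmachine_MH by blast
  fix G assume G: "realizes rep_closedN rep_nat C_N G"
  show "realizes rep_tree rep_cantor (C_sharp n)
          (\<lambda>p. Option.bind (run MH p) (\<lambda>r. Option.bind (G r) (\<lambda>s. run MK (pairB p s))))"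
    unfolding realizes_def
  proof (intro ballI impI)
    fix p assume p: "p \<in> fst rep_tree" and ne: "C_sharp n (snd rep_tree p) \<noteq> {}"
    let ?T = "binary_trees_name p"
    have st: "sharp_tree n ?T" and pne: "paths ?T \<noteq> {}"
      using ne by (auto simp: rep_tree_def C_sharp_def split: if_splits)
    have pc: "\<And>w v. w \<in> ?T \<Longrightarrow> prefix v w \<Longrightarrow> v \<in> ?T" using p by (auto simp: rep_tree_def)
    obtain x where "x \<in> paths ?T" using pne by blast
    then obtain m0 where g0: "goodm ?T m0" using exists_good[OF st] by blast
    have "m0 \<in> C_N (snd rep_closedN (EP p))"
      using EP_sound g0 by (auto simp: C_N_def rep_closedN_def)
    then obtain s where s: "G (EP p) = Some s" "s \<in> fst rep_nat" "snd rep_nat s \<in> C_N (snd rep_closedN (EP p))"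
      using G unfolding realizes_def by (auto simp: rep_closedN_def)
    have "\<forall>k. EP p k \<noteq> Suc (s 0)" using s(3) by (simp add: rep_nat_def rep_closedN_def C_N_def)
    then have gs: "goodm ?T (s 0)" using EP_complete by blast
    have "xpath p (s 0) \<in> fst rep_cantor" using xpath_le1[OF gs] by (simp add: rep_cantor_def)
    moreover have "snd rep_cantor (xpath p (s 0)) \<in> C_sharp n (snd rep_tree p)"
      using xpath_paths[OF gs pc] st by (simp add: rep_cantor_def rep_tree_def C_sharp_def)
    ultimately show "\<exists>q. Option.bind (run MH p) (\<lambda>r. Option.bind (G r) (\<lambda>s. run MK (pairB p s))) = Some q \<and>
          q \<in> fst rep_cantor \<and> snd rep_cantor q \<in> C_sharp n (snd rep_tree p)"
      using run_MH s(1) run_MK[of p s, OF gs] by simp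
  qed
qed

theorem proposition23:
  fixes n :: nat
  assumes "1 \<le> n"
  shows "weihrauch_le rep_tree rep_cantor (C_sharp n) rep_closedN rep_nat C_N"
  by (rule main)

end
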